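(* Let $V$ be a nonempty finite set, let $f : \{-1,0,1\}^V \to \mathbb{Z}\cup\{+\infty\}$ be an integral bisubmodular function with $f(\mathbf{0})=0$, let $B = \mathrm{P}(f) \cap \mathbb{Z}^V$, and let $p \in B$. Let $u, v, w \in V$ and $s_u \in \{\pm\chi_u\}$, $s_v \in \{\pm\chi_v\}$, $s_w \in \{\pm\chi_w\}$. Then: (1) if $s_u \in \Phi_B(p)$ and $-s_u + s_v \in \Phi_B(p)$, then $s_v \in \Phi_B(p)$; (2) if $s_u + s_v \in \Phi_B(p)$, $-s_v + s_w \in \Phi_B(p)$, and $s_u \neq -s_w$, then $s_u + s_w \in \Phi_B(p)$, or both $s_u \in \Phi_B(p)$ and $s_w \in \Phi_B(p)$.
   Context: $\chi_u$ is the $u$-th unit vector; $\langle p, x\rangle = \sum_u p(u)x(u)$. Let $\Phi = \{\pm \chi_u : u \in V\} \cup \{\pm\chi_u \pm \chi_v : u, v \in V, u \ne v\}$, and for $p \in B$, $\Phi_B(p) = \{\alpha \in \Phi : p + \alpha \in B\}$. For $x, y \in \{-1,0,1\}^V$, define coordinatewise $(x \sqcap y)(u) = x(u)$ if $x(u)=y(u)$ and $0$ otherwise; $(x \sqcup y)(u) = x(u)$ if $x(u)=y(u)$ or $y(u)=0$, $= y(u)$ if $x(u)=0$, and $=0$ if $0 \ne x(u) \ne y(u) \ne 0$. A function $f : \{-1,0,1\}^V \to \mathbb{R}\cup\{+\infty\}$ with $f(\mathbf{0})=0$ is bisubmodular if $f(x)+f(y) \ge f(x\sqcap y) + f(x \sqcup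 y)$ for all $x,y$; integral if its finite values are integers. $\mathrm{P}(f) = \{p \in \mathbb{R}^V : \langle p, x\rangle \le f(x) \ \forall x \in \{-1,0,1\}^V\}$. *)

theory Defs
  imports "HOL-Library.Extended_Real"
begin

text \<open>Vectors in R^V / Z^V are functions on the ambient type, required to vanish outside V.\<close>

definition sign_vecs :: "'a set \<Rightarrow> ('a \<Rightarrow> int) set" where
  "sign_vecs V = {x. (\<forall>u\<in>V. x u \<in> {-1,0,1}) \<and> (\<forall>u. u \<notin> V \<longrightarrow> x u = 0)}"

definition int_vecs :: "'a set \<Rightarrow> ('a \<Rightarrow> int) set" where
  "int_vecs V = {p. \<forall>u. u \<notin> V \<longrightarrow> p u = 0}"

definition chi :: "'a \<Rightarrow> 'a \<Rightarrow> int" where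
  "chi u = (\<lambda>t. if t = u then 1 else 0)"

definition ip :: "'a set \<Rightarrow> ('a \<Rightarrow> int) \<Rightarrow> ('a \<Rightarrow> int) \<Rightarrow> int" where
  "ip V p x = (\<Sum>u\<in>V. p u * x u)"

definition bmeet :: "('a \<Rightarrow> int) \<Rightarrow> ('a \<Rightarrow> int) \<Rightarrow> 'a \<Rightarrow> int" where
  "bmeet x y = (\<lambda>u. if x u = y u then x u else 0)"

definition bjoin :: "('a \<Rightarrow> int) \<Rightarrow> ('a \<Rightarrow> int) \<Rightarrow> 'a \<Rightarrow> int" where
  "bjoin x y = (\<lambda>u. if x u = y u \<or> y u = 0 then x u
                    else if x u = 0 then y u else 0)"

definition integral_bisubmodular :: "'a set \<Rightarrow> (('a \<Rightarrow> int) \<Rightarrow> ereal) \<Rightarrow> bool" where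
  "integral_bisubmodular V f \<longleftrightarrow>
     (\<forall>x\<in>sign_vecs V. f x = \<infinity> \<or> (\<exists>k::int. f x = ereal (of_int k))) \<and>
     f (\<lambda>_. 0) = 0 \<and>
     (\<forall>x\<in>sign_vecs V. \<forall>y\<in>sign_vecs V. f x + f y \<ge> f (bmeet x y) + f (bjoin x y))"

definition intP :: "'a set \<Rightarrow> (('a \<Rightarrow> int) \<Rightarrow> ereal) \<Rightarrow> ('a \<Rightarrow> int) set" where
  "intP V f = {p \<in> int_vecs V. \<forall>x\<in>sign_vecs V. ereal (of_int (ip V p x)) \<le> f x}"

definition Phi :: "'a set \<Rightarrow> ('a \<Rightarrow> int) set" where
  "Phi V = {(\<lambda>t. c * chi u t) | c u. c \<in> {-1,1} \<and> u \<in> V}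
         \<union> {(\<lambda>t. a * chi u t + b * chi v t) | a b u v.
               a \<in> {-1,1} \<and> b \<in> {-1,1} \<and> u \<in> V \<and> v \<in> V \<and> u \<noteq> v}"

definition PhiB :: "'a set \<Rightarrow> ('a \<Rightarrow> int) set \<Rightarrow> ('a \<Rightarrow> int) \<Rightarrow> ('a \<Rightarrow> int) set" where
  "PhiB V B p = {\<alpha> \<in> Phi V. (\<lambda>t. p t + \<alpha> t) \<in> B}"

end

theory Submission imports Defs begin
lemma ip_chi1: "finite V \<Longrightarrow> u \<in> V \<Longrightarrow> ip V (\<lambda>t. a * chi u t) x = a * x u"
proof -
  assume "finite V" "u \<in> V"
  have "ip V (\<lambda>t. a * chi u t) x = (\<Sum>t\<in>V. if t = u then a * x u else 0)"
    unfolding ip_def chi_def by (rule sum.cong) auto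
  also have "\<dots> = a * x u" using \<open>finite V\<close> \<open>u \<in> V\<close> by (simp add: sum.delta)
  finally show ?thesis .
qed
lemma ip_add: "ip V (\<lambda>t. g t + h t) x = ip V g x + ip V h x"
  by (simp add: ip_def ring_distribs sum.distrib)
lemma ip_chi2: "finite V \<Longrightarrow> u \<in> V \<Longrightarrow> v \<in> V \<Longrightarrow>
  ip V (\<lambda>t. a * chi u t + b * chi v t) x = a * x u + b * x v"
  using ip_add[of V "\<lambda>t. a * chi u t" "\<lambda>t. b * chi v t" x] ip_chi1[of V u a x] ip_chi1[of V v b x] by simp

lemma meet_S: "x \<in> sign_vecs V \<Longrightarrow> y \<in> sign_vecs V \<Longrightarrow> bmeet x y \<in> sign_vecs V"
  unfolding sign_vecs_def bmeet_def by auto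
lemma join_S: "x \<in> sign_vecs V \<Longrightarrow> y \<in> sign_vecs V \<Longrightarrow> bjoin x y \<in> sign_vecs V"
  unfolding sign_vecs_def bjoin_def by auto

lemma ip_mod: assumes "x \<in> sign_vecs V" "y \<in> sign_vecs V"
  shows "ip V p (bmeet x y) + ip V p (bjoin x y) = ip V p x + ip V p y"
proof -
  have "\<And>t. t \<in> V \<Longrightarrow> p t * bmeet x y t + p t * bjoin x y t = p t * x t + p t * y t"
  proof -
    fix t assume "t \<in> V"
    then have "x t \<in> {-1,0,1}" "y t \<in> {-1,0,1}" using assms unfolding sign_vecs_def by auto
    then show "p t * bmeet x y t + p t * bjoin x y t = p t * x t + p t * y t"
      unfolding bmeet_def bjoin_def by auto
  qed
  then show ?thesis unfolding ip_def sum.distrib[symmetric] by (rule sum.cong[OF refl])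
qed

lemma fin_S: "integral_bisubmodular V f \<Longrightarrow> x \<in> sign_vecs V \<Longrightarrow> f x = \<infinity> \<or> (\<exists>k::int. f x = ereal (of_int k))"
  unfolding integral_bisubmodular_def by blast

lemma bisub_step:
  assumes "integral_bisubmodular V f" "x \<in> sign_vecs V" "y \<in> sign_vecs V"
    "f x = ereal (of_int k1)" "f y = ereal (of_int k2)"
  shows "\<exists>km kj. f (bmeet x y) = ereal (of_int km) \<and> f (bjoin x y) = ereal (of_int kj) \<and> km + kj \<le> k1 + k2"
proof -
  have le: "f (bmeet x y) + f (bjoin x y) \<le> f x + f y" using assms(1-3) unfolding integral_bisubmodular_def by blast
  have m: "f (bmeet x y) = \<infinity> \<or> (\<exists>k::int. f (bmeet x y) = ereal (of_int k))" using fin_S[OF assms(1) meet_S[OF assms(2,3)]] .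
  have j: "f (bjoin x y) = \<infinity> \<or> (\<exists>k::int. f (bjoin x y) = ereal (of_int k))" using fin_S[OF assms(1) join_S[OF assms(2,3)]] .
  show ?thesis
  proof (cases "f (bmeet x y) = \<infinity> \<or> f (bjoin x y) = \<infinity>")
    case True
    then have "f (bmeet x y) + f (bjoin x y) = \<infinity>" using m j by auto
    with le assms(4,5) show ?thesis by simp
  next
    case False
    then obtain km kj where "f (bmeet x y) = ereal (of_int km)" "f (bjoin x y) = ereal (of_int kj)" using m j by auto
    with le assms(4,5) show ?thesis by (intro exI[of _ km] exI[of _ kj]) simp
  qed
qed

lemma B_iff: "p \<in> int_vecs V \<Longrightarrow> (\<forall>t. t \<notin> V \<longrightarrow> \<alpha> t = 0) \<Longrightarrow>
  (\<lambda>t. p t + \<alpha> t) \<in> intP V f \<longleftrightarrow> (\<forall>x\<in>sign_vecs V. ereal (of_int (ip V p x + ip V \<alpha> x)) \<le> f x)"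
  unfolding intP_def int_vecs_def by (simp add: ip_add)

lemma le_by: "f = \<infinity> \<or> (\<exists>k::int. f = ereal (of_int k)) \<Longrightarrow> (\<And>k. f = ereal (of_int k) \<Longrightarrow> P \<le> k) \<Longrightarrow> ereal (of_int P) \<le> f"
  by auto

lemma Phi1: "c \<in> {-1,1} \<Longrightarrow> u \<in> V \<Longrightarrow> (\<lambda>t. c * chi u t) \<in> Phi V"
  unfolding Phi_def by blast
lemma Phi2: "a \<in> {-1,1} \<Longrightarrow> b \<in> {-1,1} \<Longrightarrow> u \<in> V \<Longrightarrow> v \<in> V \<Longrightarrow> u \<noteq> v \<Longrightarrow> (\<lambda>t. a * chi u t + b * chi v t) \<in> Phi V"
  unfolding Phi_def by blast

lemma arith1: "(e::int) \<in> {-1,1} \<Longrightarrow> d \<in> {-1,1} \<Longrightarrow> a \<in> {-1,0,1} \<Longrightarrow> b \<in> {-1,0,1} \<Longrightarrow>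
  P \<le> k \<Longrightarrow> P + e*a \<le> k \<Longrightarrow> P + (-e*a + d*b) \<le> k \<Longrightarrow> P + d*b \<le> k"
  by auto
lemma arith_y1: "(e::int) \<in> {-1,1} \<Longrightarrow> d \<in> {-1,1} \<Longrightarrow> z \<in> {-1,1} \<Longrightarrow> a \<in> {-1,0,1} \<Longrightarrow> b \<in> {-1,0,1} \<Longrightarrow> c \<in> {-1,0,1} \<Longrightarrow>
  P \<le> k \<Longrightarrow> P + (e*a + d*b) \<le> k \<Longrightarrow> P + (-d*b + z*c) \<le> k \<Longrightarrow> \<not> P + (e*a + z*c) \<le> k \<Longrightarrow>
  a = e \<and> b = 0 \<and> c = z \<and> k = P + 1"
  by auto
lemma arith_y2: "(e::int) \<in> {-1,1} \<Longrightarrow> d \<in> {-1,1} \<Longrightarrow> z \<in> {-1,1} \<Longrightarrow> a \<in> {-1,0,1} \<Longrightarrow> b \<in> {-1,0,1} \<Longrightarrow> c \<in> {-1,0,1} \<Longrightarrow>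
  P \<le> k \<Longrightarrow> P + (e*a + d*b) \<le> k \<Longrightarrow> P + (-d*b + z*c) \<le> k \<Longrightarrow> \<not> P + e*a \<le> k \<Longrightarrow>
  a = e \<and> b = -d \<and> c = -z \<and> k = P"
  by auto
lemma arith_y3: "(e::int) \<in> {-1,1} \<Longrightarrow> d \<in> {-1,1} \<Longrightarrow> z \<in> {-1,1} \<Longrightarrow> a \<in> {-1,0,1} \<Longrightarrow> b \<in> {-1,0,1} \<Longrightarrow> c \<in> {-1,0,1} \<Longrightarrow>
  P \<le> k \<Longrightarrow> P + (e*a + d*b) \<le> k \<Longrightarrow> P + (-d*b + z*c) \<le> k \<Longrightarrow> \<not> P + z*c \<le> k \<Longrightarrow>
  a = -e \<and> b = d \<and> c = z \<and> k = P"
  by auto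

lemma le_int: "ereal (of_int a) \<le> ereal (of_int k) \<longleftrightarrow> a \<le> k"
  by simp

lemma sign_coord: "x \<in> sign_vecs V \<Longrightarrow> u \<in> V \<Longrightarrow> x u \<in> {-1,0,1}"
  unfolding sign_vecs_def by auto

lemma mem_PhiB: "p \<in> int_vecs V \<Longrightarrow> (\<forall>t. t \<notin> V \<longrightarrow> \<alpha> t = 0) \<Longrightarrow>
  \<alpha> \<in> PhiB V (intP V f) p \<longleftrightarrow> \<alpha> \<in> Phi V \<and> (\<forall>x\<in>sign_vecs V. ereal (of_int (ip V p x + ip V \<alpha> x)) \<le> f x)"
  unfolding PhiB_def using B_iff[of p V \<alpha> f] by auto

lemma sgn_obtain: "s = chi u \<or> s = (\<lambda>t. - chi u t) \<Longrightarrow> \<exists>e::int. e \<in> {-1,1} \<and> s = (\<lambda>t. e * chi u t)"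
proof -
  assume "s = chi u \<or> s = (\<lambda>t. - chi u t)"
  then show ?thesis
  proof
    assume "s = chi u" then show ?thesis by (intro exI[of _ 1]) auto
  next
    assume "s = (\<lambda>t. - chi u t)" then show ?thesis by (intro exI[of _ "-1"]) auto
  qed
qed

theorem mainTheorem4:
  fixes V :: "'a set" and f :: "('a \<Rightarrow> int) \<Rightarrow> ereal" and p su sv sw :: "'a \<Rightarrow> int"
    and u v w :: 'a
  assumes "finite V" and "V \<noteq> {}"
    and "integral_bisubmodular V f"
    and "B = intP V f"
    and "p \<in> B"
    and "u \<in> V" and "v \<in> V" and "w \<in> V"
    and "su = chi u \<or> su = (\<lambda>t. - chi u t)"
    and "sv = chi v \<or> sv = (\<lambda>t. - chi v t)"
    and "sw = chi w \<or> sw = (\<lambda>t. - chi w t)"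
  shows "(su \<in> PhiB V B p \<and> (\<lambda>t. - su t + sv t) \<in> PhiB V B p \<longrightarrow> sv \<in> PhiB V B p)
       \<and> ((\<lambda>t. su t + sv t) \<in> PhiB V B p \<and> (\<lambda>t. - sv t + sw t) \<in> PhiB V B p
            \<and> su \<noteq> (\<lambda>t. - sw t)
          \<longrightarrow> (\<lambda>t. su t + sw t) \<in> PhiB V B p \<or> (su \<in> PhiB V B p \<and> sw \<in> PhiB V B p))"
proof -
  obtain e where he: "e \<in> {-1,1}" "su = (\<lambda>t. e * chi u t)" using sgn_obtain[OF assms(9)] by blast
  obtain d where hd: "d \<in> {-1,1}" "sv = (\<lambda>t. d * chi v t)" using sgn_obtain[OF assms(10)] by blast
  obtain z where hz: "z \<in> {-1,1}" "sw = (\<lambda>t. z * chi w t)" using sgn_obtain[OF assms(11)] by blast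
  let ?S = "sign_vecs V"
  have pint: "p \<in> int_vecs V" and hp: "\<forall>x\<in>?S. ereal (of_int (ip V p x)) \<le> f x"
    using assms(4,5) unfolding intP_def by auto
  have fin: "\<And>x. x \<in> ?S \<Longrightarrow> f x = \<infinity> \<or> (\<exists>k::int. f x = ereal (of_int k))"
    using fin_S[OF assms(3)] by blast
  have supp: "\<And>a b (u'::'a) v'. u' \<in> V \<Longrightarrow> v' \<in> V \<Longrightarrow> \<forall>t. t \<notin> V \<longrightarrow> a * chi u' t + b * chi v' t = 0"
    unfolding chi_def by auto
  have supp1: "\<And>a (u'::'a). u' \<in> V \<Longrightarrow> \<forall>t. t \<notin> V \<longrightarrow> a * chi u' t = 0"
    unfolding chi_def by auto
  have m1: "\<And>u' a. u' \<in> V \<Longrightarrow> (\<lambda>t. a * chi u' t) \<in> PhiB V B p \<longleftrightarrow> (\<lambda>t. a * chi u' t) \<in> Phi V \<and> (\<forall>x\<in>?S. ereal (of_int (ip V p x + ip V (\<lambda>t. a * chi u' t) x)) \<le> f x)"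
    using mem_PhiB[OF pint supp1, where f=f] assms(4) by blast
  have m2: "\<And>u' v' a b. u' \<in> V \<Longrightarrow> v' \<in> V \<Longrightarrow> (\<lambda>t. a * chi u' t + b * chi v' t) \<in> PhiB V B p \<longleftrightarrow> (\<lambda>t. a * chi u' t + b * chi v' t) \<in> Phi V \<and> (\<forall>x\<in>?S. ereal (of_int (ip V p x + ip V (\<lambda>t. a * chi u' t + b * chi v' t) x)) \<le> f x)"
    using mem_PhiB[OF pint supp, where f=f] assms(4) by blast
  have ipA: "\<And>a b x u' v'. u' \<in> V \<Longrightarrow> v' \<in> V \<Longrightarrow> ip V (\<lambda>t. a * chi u' t + b * chi v' t) x = a * x u' + b * x v'"
    using ip_chi2[OF assms(1)] by blast
  have ip1: "\<And>a x u'. u' \<in> V \<Longrightarrow> ip V (\<lambda>t. a * chi u' t) x = a * x u'"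
    using ip_chi1[OF assms(1)] by blast
  have neg1: "(\<lambda>t. - su t + sv t) = (\<lambda>t. (-e) * chi u t + d * chi v t)" using he hd by auto
  have neg2: "(\<lambda>t. - sv t + sw t) = (\<lambda>t. (-d) * chi v t + z * chi w t)" using hd hz by auto
  have pl1: "(\<lambda>t. su t + sv t) = (\<lambda>t. e * chi u t + d * chi v t)" using he hd by auto
  have pl2: "(\<lambda>t. su t + sw t) = (\<lambda>t. e * chi u t + z * chi w t)" using he hz by auto
  show ?thesis
  proof (intro conjI impI)
    assume H: "su \<in> PhiB V B p \<and> (\<lambda>t. - su t + sv t) \<in> PhiB V B p"
    have "(\<lambda>t. e * chi u t) \<in> PhiB V B p" using H unfolding he(2) by blast
    then have "\<forall>x\<in>?S. ereal (of_int (ip V p x + ip V (\<lambda>t. e * chi u t) x)) \<le> f x" using m1[OF assms(6)] by blast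
    then have A1: "\<forall>x\<in>?S. ereal (of_int (ip V p x + e * x u)) \<le> f x"
      by (simp only: ip1[OF assms(6)])
    have "(\<lambda>t. (-e) * chi u t + d * chi v t) \<in> PhiB V B p" using H unfolding neg1 by blast
    then have "\<forall>x\<in>?S. ereal (of_int (ip V p x + ip V (\<lambda>t. (-e) * chi u t + d * chi v t) x)) \<le> f x" using m2[OF assms(6,7)] by blast
    then have A2: "\<forall>x\<in>?S. ereal (of_int (ip V p x + (- e * x u + d * x v))) \<le> f x"
      by (simp only: ipA[OF assms(6,7)])
    have G: "\<forall>x\<in>?S. ereal (of_int (ip V p x + d * x v)) \<le> f x"
    proof
      fix x assume x: "x \<in> ?S"
      show "ereal (of_int (ip V p x + d * x v)) \<le> f x"
      proof (rule le_by[OF fin[OF x]])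
        fix k assume k: "f x = ereal (of_int k)"
        show "ip V p x + d * x v \<le> k"
          apply (rule arith1[OF he(1) hd(1) sign_coord[OF x assms(6)] sign_coord[OF x assms(7)]])
          using bspec[OF hp x] bspec[OF A1 x] bspec[OF A2 x] k by (simp_all only: k le_int not_False_eq_True)
      qed
    qed
    have "\<forall>x\<in>?S. ereal (of_int (ip V p x + ip V (\<lambda>t. d * chi v t) x)) \<le> f x"
      using G by (simp only: ip1[OF assms(7)])
    then show "sv \<in> PhiB V B p" using m1[OF assms(7)] Phi1[OF hd(1) assms(7)] hd(2) by blast
  next
    assume H: "(\<lambda>t. su t + sv t) \<in> PhiB V B p \<and> (\<lambda>t. - sv t + sw t) \<in> PhiB V B p \<and> su \<noteq> (\<lambda>t. - sw t)"
    have "(\<lambda>t. e * chi u t + d * chi v t) \<in> PhiB V B p" using H unfolding pl1 by blast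
    then have "\<forall>x\<in>?S. ereal (of_int (ip V p x + ip V (\<lambda>t. e * chi u t + d * chi v t) x)) \<le> f x" using m2[OF assms(6,7)] by blast
    then have A: "\<forall>x\<in>?S. ereal (of_int (ip V p x + (e * x u + d * x v))) \<le> f x"
      by (simp only: ipA[OF assms(6,7)])
    have "(\<lambda>t. (-d) * chi v t + z * chi w t) \<in> PhiB V B p" using H unfolding neg2 by blast
    then have "\<forall>x\<in>?S. ereal (of_int (ip V p x + ip V (\<lambda>t. (-d) * chi v t + z * chi w t) x)) \<le> f x" using m2[OF assms(7,8)] by blast
    then have C: "\<forall>x\<in>?S. ereal (of_int (ip V p x + (- d * x v + z * x w))) \<le> f x"
      by (simp only: ipA[OF assms(7,8)])
    show "(\<lambda>t. su t + sw t) \<in> PhiB V B p \<or> su \<in> PhiB V B p \<and> sw \<in> PhiB V B p"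
    proof (cases "u = w")
      case True
      have "e = z"
      proof (rule ccontr)
        assume "e \<noteq> z"
        then have "z = -e" using he(1) hz(1) by auto
        then have "su = (\<lambda>t. - sw t)" using he hz True by auto
        then show False using H by blast
      qed
      then have sw: "sw = su" using he hz True by auto
      have G: "\<forall>x\<in>?S. ereal (of_int (ip V p x + e * x u)) \<le> f x"
      proof
        fix x assume x: "x \<in> ?S"
        show "ereal (of_int (ip V p x + e * x u)) \<le> f x"
        proof (rule le_by[OF fin[OF x]])
          fix k assume k: "f x = ereal (of_int k)"
          have "ip V p x + (e * x u + d * x v) \<le> k" "ip V p x + (- d * x v + z * x w) \<le> k"
            using bspec[OF A x] bspec[OF C x] k by (simp_all only: k le_int not_False_eq_True)
          then show "ip V p x + e * x u \<le> k" using True \<open>e = z\<close> by simp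
        qed
      qed
      have "\<forall>x\<in>?S. ereal (of_int (ip V p x + ip V (\<lambda>t. e * chi u t) x)) \<le> f x"
        using G by (simp only: ip1[OF assms(6)])
      then have "su \<in> PhiB V B p" using m1[OF assms(6)] Phi1[OF he(1) assms(6)] he(2) by blast
      then show ?thesis unfolding sw by (intro disjI2 conjI)
    next
      case False
      show ?thesis
      proof (rule ccontr)
        assume N: "\<not> ?thesis"
        have Phi_uw: "(\<lambda>t. e * chi u t + z * chi w t) \<in> Phi V" by (rule Phi2[OF he(1) hz(1) assms(6,8) False])
        have N1: "(\<lambda>t. su t + sw t) \<notin> PhiB V B p" using N by (intro notI) (erule notE, erule disjI1)
        have "(\<lambda>t. e * chi u t + z * chi w t) \<notin> PhiB V B p" using N1 unfolding pl2 .
        then have nn1: "\<not> (\<forall>x\<in>?S. ereal (of_int (ip V p x + ip V (\<lambda>t. e * chi u t + z * chi w t) x)) \<le> f x)"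
          using m2[OF assms(6,8)] Phi_uw by blast
        have "\<not> (\<forall>x\<in>?S. ereal (of_int (ip V p x + (e * x u + z * x w))) \<le> f x)"
          using nn1[unfolded ipA[OF assms(6,8)]] .
        then obtain y1 where y1: "y1 \<in> ?S" "\<not> ereal (of_int (ip V p y1 + (e * y1 u + z * y1 w))) \<le> f y1" by blast
        then obtain k1 where k1: "f y1 = ereal (of_int k1)" using fin[OF y1(1)] by auto
        have "y1 u = e \<and> y1 v = 0 \<and> y1 w = z \<and> k1 = ip V p y1 + 1"
          apply (rule arith_y1[OF he(1) hd(1) hz(1) sign_coord[OF y1(1) assms(6)] sign_coord[OF y1(1) assms(7)] sign_coord[OF y1(1) assms(8)]])
          using bspec[OF hp y1(1)] bspec[OF A y1(1)] bspec[OF C y1(1)] y1(2) k1 by (simp_all only: k1 le_int not_False_eq_True)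
        then have Y1: "y1 u = e" "y1 v = 0" "y1 w = z" "k1 = ip V p y1 + 1" by auto
        have "\<not> (su \<in> PhiB V B p \<and> sw \<in> PhiB V B p)" using N by (intro notI) (erule notE, erule disjI2)
        then have "\<not> (su \<in> PhiB V B p) \<or> \<not> (sw \<in> PhiB V B p)" by (rule de_Morgan_conj[THEN iffD1])
        then show False
        proof
          assume "su \<notin> PhiB V B p"
          then have "(\<lambda>t. e * chi u t) \<notin> PhiB V B p" unfolding he(2) .
          then have nn2: "\<not> (\<forall>x\<in>?S. ereal (of_int (ip V p x + ip V (\<lambda>t. e * chi u t) x)) \<le> f x)"
            using m1[OF assms(6)] Phi1[OF he(1) assms(6)] by blast
          have "\<not> (\<forall>x\<in>?S. ereal (of_int (ip V p x + e * x u)) \<le> f x)"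
          using nn2[unfolded ip1[OF assms(6)]] .
          then obtain y2 where y2: "y2 \<in> ?S" "\<not> ereal (of_int (ip V p y2 + e * y2 u)) \<le> f y2" by blast
          then obtain k2 where k2: "f y2 = ereal (of_int k2)" using fin[OF y2(1)] by auto
          have "y2 u = e \<and> y2 v = -d \<and> y2 w = -z \<and> k2 = ip V p y2"
            apply (rule arith_y2[OF he(1) hd(1) hz(1) sign_coord[OF y2(1) assms(6)] sign_coord[OF y2(1) assms(7)] sign_coord[OF y2(1) assms(8)]])
            using bspec[OF hp y2(1)] bspec[OF A y2(1)] bspec[OF C y2(1)] y2(2) k2 by (simp_all only: k2 le_int not_False_eq_True)
          then have Y2: "y2 u = e" "y2 v = -d" "y2 w = -z" "k2 = ip V p y2" by auto
          obtain km kj where K: "f (bmeet y1 y2) = ereal (of_int km)" "f (bjoin y1 y2) = ereal (of_int kj)" "km + kj \<le> k1 + k2"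
            using bisub_step[OF assms(3) y1(1) y2(1) k1 k2] by blast
          have mS: "bmeet y1 y2 \<in> ?S" and jS: "bjoin y1 y2 \<in> ?S" using meet_S join_S y1(1) y2(1) by auto
          have mu: "bmeet y1 y2 u = e" "bmeet y1 y2 v = 0" using Y1 Y2 hd(1) unfolding bmeet_def by auto
          have ju: "bjoin y1 y2 w = 0" "bjoin y1 y2 v = -d" using Y1 Y2 hd(1) hz(1) unfolding bjoin_def by auto
          have "ip V p (bmeet y1 y2) + (e * e + d * 0) \<le> km" using bspec[OF A mS] K(1) mu by (simp only: K(1) mu le_int)
          moreover have "ip V p (bjoin y1 y2) + (- d * (-d) + z * 0) \<le> kj" using bspec[OF C jS] K(2) ju by (simp only: K(2) ju le_int)
          moreover have "ip V p (bmeet y1 y2) + ip V p (bjoin y1 y2) = ip V p y1 + ip V p y2" using ip_mod y1(1) y2(1) by blast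
          moreover have "e * e = 1" "d * d = 1" using he(1) hd(1) by auto
          ultimately show False using K(3) Y1(4) Y2(4) by simp
        next
          assume "sw \<notin> PhiB V B p"
          then have "(\<lambda>t. z * chi w t) \<notin> PhiB V B p" unfolding hz(2) .
          then have nn3: "\<not> (\<forall>x\<in>?S. ereal (of_int (ip V p x + ip V (\<lambda>t. z * chi w t) x)) \<le> f x)"
            using m1[OF assms(8)] Phi1[OF hz(1) assms(8)] by blast
          have "\<not> (\<forall>x\<in>?S. ereal (of_int (ip V p x + z * x w)) \<le> f x)"
          using nn3[unfolded ip1[OF assms(8)]] .
          then obtain y2 where y2: "y2 \<in> ?S" "\<not> ereal (of_int (ip V p y2 + z * y2 w)) \<le> f y2" by blast
          then obtain k2 where k2: "f y2 = ereal (of_int k2)" using fin[OF y2(1)] by auto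
          have "y2 u = -e \<and> y2 v = d \<and> y2 w = z \<and> k2 = ip V p y2"
            apply (rule arith_y3[OF he(1) hd(1) hz(1) sign_coord[OF y2(1) assms(6)] sign_coord[OF y2(1) assms(7)] sign_coord[OF y2(1) assms(8)]])
            using bspec[OF hp y2(1)] bspec[OF A y2(1)] bspec[OF C y2(1)] y2(2) k2 by (simp_all only: k2 le_int not_False_eq_True)
          then have Y2: "y2 u = -e" "y2 v = d" "y2 w = z" "k2 = ip V p y2" by auto
          obtain km kj where K: "f (bmeet y1 y2) = ereal (of_int km)" "f (bjoin y1 y2) = ereal (of_int kj)" "km + kj \<le> k1 + k2"
            using bisub_step[OF assms(3) y1(1) y2(1) k1 k2] by blast
          have mS: "bmeet y1 y2 \<in> ?S" and jS: "bjoin y1 y2 \<in> ?S" using meet_S join_S y1(1) y2(1) by auto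
          have mu: "bmeet y1 y2 w = z" "bmeet y1 y2 v = 0" using Y1 Y2 hd(1) unfolding bmeet_def by auto
          have ju: "bjoin y1 y2 u = 0" "bjoin y1 y2 v = d" using Y1 Y2 hd(1) he(1) unfolding bjoin_def by auto
          have "ip V p (bmeet y1 y2) + (- d * 0 + z * z) \<le> km" using bspec[OF C mS] K(1) mu by (simp only: K(1) mu le_int)
          moreover have "ip V p (bjoin y1 y2) + (e * 0 + d * d) \<le> kj" using bspec[OF A jS] K(2) ju by (simp only: K(2) ju le_int)
          moreover have "ip V p (bmeet y1 y2) + ip V p (bjoin y1 y2) = ip V p y1 + ip V p y2" using ip_mod y1(1) y2(1) by blast
          moreover have "z * z = 1" "d * d = 1" using hz(1) hd(1) by auto
          ultimately show False using K(3) Y1(4) Y2(4) by simp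
        qed
      qed
    qed
  qed
qed

end
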